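(* Let $K\subset\hat{\mathbb{C}}$ be a compactum and $h: K\rightarrow\hat{\mathbb{C}}$ an embedding. Then $h(d)\in\mathcal{D}_{h(K)}^{PS}$ for every $d\in\mathcal{D}_K^{PS}$. Therefore the Peano models $\mathcal{D}_K^{PS}$ and $\mathcal{D}_{h(K)}^{PS}$ (with quotient topologies) are homeomorphic.
   Context: A compactum is a compact metric space. A Peano space is a compactum having at most countably many non-degenerate components, each locally connected, such that for every $C>0$ at most finitely many of them have diameter greater than $C$. A monotone decomposition of a compactum $K$ is an (upper semicontinuous) partition of $K$ into subcontinua, with the quotient topology on the hyperspace. For a compactum $K\subset\hat{\mathbb{C}}$, $\mathcal{D}_K^{PS}$ denotes the unique monotone decomposition of $K$ with Peano hyperspace that is finer than every other such decomposition (its existence is known); the hyperspace $\mathcal{D}_K^{PS}$ with the quotient topology is called the Peano model of $K$. *)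

theory Defs
  imports "HOL-Analysis.Analysis"
begin

definition riemann_sphere :: "(real^3) set" where
  "riemann_sphere = sphere 0 1"

definition mdiam :: "'a metric \<Rightarrow> 'a set \<Rightarrow> real" where
  "mdiam m S = (SUP x\<in>S. SUP y\<in>S. mdist m x y)"

definition peano_space :: "'a topology \<Rightarrow> bool" where
  "peano_space X \<longleftrightarrow>
     compact_space X \<and>
     (\<exists>m. X = mtopology_of m \<and>
        (\<forall>C>0. finite {c \<in> connected_components_of X. \<not> (\<exists>x. c = {x}) \<and> mdiam m c > C})) \<and>
     countable {c \<in> connected_components_of X. \<not> (\<exists>x. c = {x})} \<and>
     (\<forall>c \<in> connected_components_of X. \<not> (\<exists>x. c = {x}) \<longrightarrow> locally_connected_space (subtopology X c))"

text \<open>Monotone decomposition of a compactum K: an upper semicontinuous partition of K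
  into subcontinua (nonempty compact connected sets).\<close>
definition monotone_decomp :: "'a::metric_space set \<Rightarrow> 'a set set \<Rightarrow> bool" where
  "monotone_decomp K D \<longleftrightarrow>
     \<Union>D = K \<and>
     (\<forall>d\<in>D. d \<noteq> {} \<and> compact d \<and> connected d) \<and>
     (\<forall>d\<in>D. \<forall>e\<in>D. d \<noteq> e \<longrightarrow> d \<inter> e = {}) \<and>
     (\<forall>U. openin (top_of_set K) U \<longrightarrow> openin (top_of_set K) (\<Union>{d\<in>D. d \<subseteq> U}))"

text \<open>The hyperspace D with the quotient topology: a family of elements is open
  iff its union is (relatively) open in K.\<close>
definition decomp_topology :: "'a::topological_space set \<Rightarrow> 'a set set \<Rightarrow> 'a set topology" where
  "decomp_topology K D = topology (\<lambda>V. V \<subseteq> D \<and> openin (top_of_set K) (\<Union>V))"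

definition finer_decomp :: "'a set set \<Rightarrow> 'a set set \<Rightarrow> bool" where
  "finer_decomp D E \<longleftrightarrow> (\<forall>d\<in>D. \<exists>e\<in>E. d \<subseteq> e)"

definition is_PS_decomp :: "'a::metric_space set \<Rightarrow> 'a set set \<Rightarrow> bool" where
  "is_PS_decomp K D \<longleftrightarrow>
     monotone_decomp K D \<and> peano_space (decomp_topology K D) \<and>
     (\<forall>E. monotone_decomp K E \<and> peano_space (decomp_topology K E) \<longrightarrow> finer_decomp D E)"

end

theory Submission
  imports Defs
begin

lemma metric_transport:
  assumes hmf: "homeomorphic_maps X Y f g" and X: "X = mtopology_of m"
  shows "\<exists>m'. Y = mtopology_of m' \<and> mspace m' = topspace Y \<and>
           (\<forall>a\<in>topspace Y. \<forall>b\<in>topspace Y. mdist m' a b = mdist m (g a) (g b))"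
proof -
  define M where "M = mspace m"
  define d where "d = mdist m"
  interpret m: Metric_space M d unfolding M_def d_def by (rule Metric_space_mspace_mdist)
  have X': "X = m.mtopology" using X by (simp add: mtopology_of_def M_def d_def)
  have hmf': "homeomorphic_map X Y f" and hmg: "homeomorphic_map Y X g"
    using hmf homeomorphic_maps_map by blast+
  have fg: "(\<forall>x \<in> M. g(f x) = x) \<and> (\<forall>y \<in> topspace Y. f(g y) = y)"
    using hmf X' unfolding homeomorphic_maps_def by auto
  define d' where "d' x y \<equiv> d (g x) (g y)" for x y
  interpret m': Metric_space "topspace Y" "d'"
    unfolding d'_def
  proof
    show "(d (g x) (g y) = 0) = (x = y)" if "x \<in> topspace Y" "y \<in> topspace Y" for x y
      by (metis fg X' hmg homeomorphic_imp_surjective_map imageI m.topspace_mtopology m.zero that)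
    show "d (g x) (g z) \<le> d (g x) (g y) + d (g y) (g z)"
      if "x \<in> topspace Y" and "y \<in> topspace Y" and "z \<in> topspace Y" for x y z
      by (metis X' that hmg homeomorphic_eq_everything_map imageI m.topspace_mtopology m.triangle)
  qed (auto simp: m.nonneg m.commute)
  have "Y = m'.mtopology"
    unfolding topology_eq
  proof (intro allI)
    fix S
    have "openin m'.mtopology S" if S: "S \<subseteq> topspace Y" and "openin X (g ` S)"
      unfolding m'.openin_mtopology
    proof (intro conjI that strip)
      fix y
      assume "y \<in> S"
      then obtain r where "r>0" and r: "m.mball (g y) r \<subseteq> g ` S" 
        using X' \<open>openin X (g ` S)\<close> m.openin_mtopology using \<open>y \<in> S\<close> by auto
      then have "g ` m'.mball y r \<subseteq> m.mball (g y) r"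
        using X' d'_def hmg homeomorphic_imp_surjective_map by fastforce
      with S fg have "m'.mball y r \<subseteq> S"
        by (smt (verit, del_insts) image_iff m'.in_mball r subset_iff)
      then show "\<exists>r>0. m'.mball y r \<subseteq> S"
        using \<open>0 < r\<close> by blast 
    qed
    moreover have "openin X (g ` S)" if ope': "openin m'.mtopology S"
    proof -
      have "\<exists>r>0. m.mball (g y) r \<subseteq> g ` S" if "y \<in> S" for y
      proof -
        have y: "y \<in> topspace Y"
          using m'.openin_mtopology ope' that by blast
        obtain r where "r > 0" and r: "m'.mball y r \<subseteq> S"
          using ope' by (meson \<open>y \<in> S\<close> m'.openin_mtopology)
        moreover have "\<And>x. \<lbrakk>x \<in> M; d (g y) x < r\<rbrakk> \<Longrightarrow> \<exists>u. u \<in> topspace Y \<and> d' y u < r \<and> x = g u"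
          using fg X' d'_def hmf' homeomorphic_imp_surjective_map by fastforce
        ultimately have "m.mball (g y) r \<subseteq> g ` m'.mball y r"
          using y by (force simp: m'.openin_mtopology)
        then show ?thesis
          using \<open>0 < r\<close> r by blast
      qed
      then show ?thesis
        using X' hmg homeomorphic_imp_surjective_map m.openin_mtopology ope' openin_subset by fastforce
    qed
    ultimately have "(S \<subseteq> topspace Y \<and> openin X (g ` S)) = openin m'.mtopology S"
      using m'.topspace_mtopology openin_subset by blast
    then show "openin Y S = openin m'.mtopology S"
      by (simp add: m'.mopen_def homeomorphic_map_openness_eq [OF hmg])
  qed
  then show ?thesis
    by (intro exI[of _ "metric (topspace Y, d')"]) (auto simp: d'_def d_def)
qed


lemma peano_homeo:
  assumes P: "peano_space X" and H: "X homeomorphic_space Y"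
  shows "peano_space Y"
proof -
  obtain f g where hm: "homeomorphic_maps X Y f g" using H homeomorphic_space_def by blast
  have hmf: "homeomorphic_map X Y f" using hm homeomorphic_maps_map by blast
  have gf: "\<And>x. x \<in> topspace X \<Longrightarrow> g (f x) = x" using hm unfolding homeomorphic_maps_def by auto
  have injf: "inj_on f (topspace X)" by (metis gf inj_on_inverseI)
  have CC: "connected_components_of Y = (image f) ` (connected_components_of X)"
    by (rule homeomorphic_map_connected_components_of[OF hmf])
  have sub: "\<And>c. c \<in> connected_components_of X \<Longrightarrow> c \<subseteq> topspace X"
    using connected_components_of_subset by blast
  have nd: "\<And>c. c \<in> connected_components_of X \<Longrightarrow> (\<exists>x. f ` c = {x}) \<longleftrightarrow> (\<exists>x. c = {x})"
  proof -
    fix c assume c: "c \<in> connected_components_of X"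
    show "(\<exists>x. f ` c = {x}) \<longleftrightarrow> (\<exists>x. c = {x})"
    proof
      assume "\<exists>x. f ` c = {x}"
      then obtain y where y: "f ` c = {y}" by blast
      then have "c \<noteq> {}" by auto
      then obtain a where a: "a \<in> c" by blast
      have "c = {a}"
      proof -
        have "\<And>b. b \<in> c \<Longrightarrow> b = a"
          using y a sub[OF c] injf by (metis imageI inj_on_def singletonD subsetD)
        then show ?thesis using a by blast
      qed
      then show "\<exists>x. c = {x}" by blast
    qed auto
  qed
  obtain m where X: "X = mtopology_of m"
    and fin: "\<forall>C>0. finite {c \<in> connected_components_of X. \<not> (\<exists>x. c = {x}) \<and> mdiam m c > C}"
    using P unfolding peano_space_def by blast
  obtain m' where Y: "Y = mtopology_of m'" and ms: "mspace m' = topspace Y"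
    and md: "\<forall>a\<in>topspace Y. \<forall>b\<in>topspace Y. mdist m' a b = mdist m (g a) (g b)"
    using metric_transport[OF hm X] by blast
  have fimg: "\<And>c. c \<subseteq> topspace X \<Longrightarrow> f ` c \<subseteq> topspace Y"
    using hm unfolding homeomorphic_maps_def continuous_map_def by blast
  have diam: "mdiam m' (f ` c) = mdiam m c" if c: "c \<in> connected_components_of X" for c
  proof -
    have "mdiam m' (f ` c) = (SUP x\<in>c. SUP y\<in>c. mdist m' (f x) (f y))"
      unfolding mdiam_def by (simp add: image_image)
    also have "\<dots> = (SUP x\<in>c. SUP y\<in>c. mdist m x y)"
      apply (rule SUP_cong[OF refl])+
      using md fimg[OF sub[OF c]] gf sub[OF c] by (metis image_subset_iff subsetD)
    finally show ?thesis unfolding mdiam_def .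
  qed
  have eqset: "\<And>Q. {c' \<in> connected_components_of Y. \<not> (\<exists>x. c' = {x}) \<and> Q c'} =
      (image f) ` {c \<in> connected_components_of X. \<not> (\<exists>x. c = {x}) \<and> Q (f ` c)}"
  proof -
    fix Q
    show "{c' \<in> connected_components_of Y. \<not> (\<exists>x. c' = {x}) \<and> Q c'} =
      (image f) ` {c \<in> connected_components_of X. \<not> (\<exists>x. c = {x}) \<and> Q (f ` c)}"
      unfolding CC
    proof (rule set_eqI, rule iffI)
      fix z assume "z \<in> {c' \<in> (image f) ` connected_components_of X. \<not> (\<exists>x. c' = {x}) \<and> Q c'}"
      then obtain c where "c \<in> connected_components_of X" "z = f ` c" "\<not> (\<exists>x. f ` c = {x})" "Q (f ` c)" by blast
      then show "z \<in> (image f) ` {c \<in> connected_components_of X. \<not> (\<exists>x. c = {x}) \<and> Q (f ` c)}"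
        using nd by blast
    next
      fix z assume "z \<in> (image f) ` {c \<in> connected_components_of X. \<not> (\<exists>x. c = {x}) \<and> Q (f ` c)}"
      then obtain c where "c \<in> connected_components_of X" "z = f ` c" "\<not> (\<exists>x. c = {x})" "Q (f ` c)" by blast
      then show "z \<in> {c' \<in> (image f) ` connected_components_of X. \<not> (\<exists>x. c' = {x}) \<and> Q c'}"
        using nd by blast
    qed
  qed
  have "compact_space Y" using P H homeomorphic_compact_space peano_space_def by blast
  moreover have "\<forall>C>0. finite {c \<in> connected_components_of Y. \<not> (\<exists>x. c = {x}) \<and> mdiam m' c > C}"
  proof (intro allI impI)
    fix C :: real assume "C > 0"
    have "{c \<in> connected_components_of Y. \<not> (\<exists>x. c = {x}) \<and> mdiam m' c > C} =
      (image f) ` {c \<in> connected_components_of X. \<not> (\<exists>x. c = {x}) \<and> mdiam m' (f ` c) > C}"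
      by (rule eqset)
    also have "\<dots> = (image f) ` {c \<in> connected_components_of X. \<not> (\<exists>x. c = {x}) \<and> mdiam m c > C}"
      using diam by (metis (lifting) )
    finally show "finite {c \<in> connected_components_of Y. \<not> (\<exists>x. c = {x}) \<and> mdiam m' c > C}"
      using fin \<open>C>0\<close> by simp
  qed
  moreover have "countable {c \<in> connected_components_of Y. \<not> (\<exists>x. c = {x})}"
    using eqset[of "\<lambda>_. True"] P unfolding peano_space_def by simp
  moreover have "\<forall>c \<in> connected_components_of Y. \<not> (\<exists>x. c = {x}) \<longrightarrow> locally_connected_space (subtopology Y c)"
  proof (intro ballI impI)
    fix c' assume c': "c' \<in> connected_components_of Y" "\<not> (\<exists>x. c' = {x})"
    then obtain c where c: "c \<in> connected_components_of X" "c' = f ` c" using CC by blast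
    with c' nd have "\<not> (\<exists>x. c = {x})" by blast
    then have "locally_connected_space (subtopology X c)" using P c unfolding peano_space_def by blast
    moreover have "homeomorphic_map (subtopology X c) (subtopology Y c') f"
      apply (rule homeomorphic_map_subtopologies[OF hmf])
      using c sub[OF c(1)] fimg[OF sub[OF c(1)]] by auto
    ultimately show "locally_connected_space (subtopology Y c')"
      using homeomorphic_locally_connected_space homeomorphic_map_imp_homeomorphic_space by blast
  qed
  ultimately show ?thesis unfolding peano_space_def using Y by blast
qed


definition pdisj :: "'a set set \<Rightarrow> bool" where
  "pdisj D \<longleftrightarrow> (\<forall>d\<in>D. \<forall>e\<in>D. d \<noteq> e \<longrightarrow> d \<inter> e = {})"

lemma openin_decomp:
  assumes "pdisj D"
  shows "openin (decomp_topology K D) V \<longleftrightarrow> V \<subseteq> D \<and> openin (top_of_set K) (\<Union>V)"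
proof -
  have "istopology (\<lambda>V. V \<subseteq> D \<and> openin (top_of_set K) (\<Union>V))"
    unfolding istopology_def
  proof (rule conjI; intro allI impI)
    fix S T assume S: "S \<subseteq> D \<and> openin (top_of_set K) (\<Union>S)" and T: "T \<subseteq> D \<and> openin (top_of_set K) (\<Union>T)"
    have "\<Union>(S \<inter> T) = \<Union>S \<inter> \<Union>T"
    proof
      show "\<Union>S \<inter> \<Union>T \<subseteq> \<Union>(S \<inter> T)"
      proof
        fix x assume "x \<in> \<Union>S \<inter> \<Union>T"
        then obtain a b where "a \<in> S" "b \<in> T" "x \<in> a" "x \<in> b" by blast
        then have "a = b" using S T assms unfolding pdisj_def by blast
        then show "x \<in> \<Union>(S \<inter> T)" using \<open>a \<in> S\<close> \<open>b \<in> T\<close> \<open>x \<in> a\<close> by blast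
      qed
    qed blast
    then show "S \<inter> T \<subseteq> D \<and> openin (top_of_set K) (\<Union>(S \<inter> T))"
      using S T by auto
  next
    fix F assume F: "\<forall>S\<in>F. S \<subseteq> D \<and> openin (top_of_set K) (\<Union>S)"
    have "\<Union>(\<Union>F) = \<Union>(Union ` F)" by blast
    then show "\<Union>F \<subseteq> D \<and> openin (top_of_set K) (\<Union>(\<Union>F))"
      using F by auto
  qed
  then show ?thesis unfolding decomp_topology_def by simp
qed

lemma topspace_decomp:
  assumes "pdisj D" "\<Union>D = K"
  shows "topspace (decomp_topology K D) = D"
proof -
  have "openin (decomp_topology K D) D" using assms openin_decomp by fastforce
  moreover have "topspace (decomp_topology K D) \<subseteq> D"
    using openin_decomp[OF assms(1), of K "topspace (decomp_topology K D)"] by simp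
  ultimately show ?thesis using openin_subset by blast
qed

lemma pdisj_image:
  assumes "pdisj D" "inj_on h K" "\<Union>D = K"
  shows "pdisj ((image h) ` D)"
  using assms unfolding pdisj_def inj_on_def by blast

lemma dmap_cont:
  assumes hom: "homeomorphism K T h g" and D: "\<Union>D = K" "pdisj D"
  shows "continuous_map (decomp_topology K D) (decomp_topology T ((image h) ` D)) (image h)"
proof -
  have inj: "inj_on h K"
    by (rule inj_on_inverseI[where g=g]) (use hom in \<open>simp add: homeomorphism_def\<close>)
  have hK: "h ` K = T" using hom unfolding homeomorphism_def by blast
  have E1: "\<Union>((image h) ` D) = T" using D hK by blast
  have E2: "pdisj ((image h) ` D)" using pdisj_image[OF D(2) inj D(1)] .
  have t1: "topspace (decomp_topology K D) = D" using topspace_decomp[OF D(2) D(1)] .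
  have t2: "topspace (decomp_topology T ((image h) ` D)) = (image h) ` D" using topspace_decomp[OF E2 E1] .
  show ?thesis
    unfolding continuous_map_def t1 t2
  proof (intro conjI allI impI)
    show "image h \<in> D \<rightarrow> (image h) ` D" by blast
  next
    fix U assume "openin (decomp_topology T ((image h) ` D)) U"
    then have U: "U \<subseteq> (image h) ` D" "openin (top_of_set T) (\<Union>U)" using openin_decomp[OF E2] by blast+
    have cont: "continuous_on K h" using hom unfolding homeomorphism_def by blast
    have hKT: "h \<in> K \<rightarrow> T" using hK by blast
    have op: "openin (top_of_set K) (K \<inter> h -` (\<Union>U))"
      using continuous_openin_preimage[OF cont hKT U(2)] .
    have eq: "\<Union>{x \<in> D. h ` x \<in> U} = K \<inter> h -` (\<Union>U)"
    proof
      show "\<Union>{x \<in> D. h ` x \<in> U} \<subseteq> K \<inter> h -` \<Union>U"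
        using D(1) by blast
      show "K \<inter> h -` \<Union>U \<subseteq> \<Union>{x \<in> D. h ` x \<in> U}"
      proof
        fix x assume x: "x \<in> K \<inter> h -` \<Union>U"
        then obtain e where e: "e \<in> D" "h ` e \<in> U" "h x \<in> h ` e" using U(1) by blast
        then obtain y where y: "y \<in> e" "h x = h y" by blast
        have "x \<in> K" using x by blast
        moreover have "y \<in> K" using y e(1) D(1) by blast
        ultimately have "x = y" using inj y(2) by (simp add: inj_on_def)
        then show "x \<in> \<Union>{x \<in> D. h ` x \<in> U}"
          using e y by blast
      qed
    qed
    have sub: "{x \<in> D. h ` x \<in> U} \<subseteq> D" by blast
    show "openin (decomp_topology K D) {x \<in> D. h ` x \<in> U}"
      unfolding openin_decomp[OF D(2)] using sub op eq by simp
  qed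
qed

lemma dmap_homeo:
  assumes hom: "homeomorphism K T h g" and D: "\<Union>D = K" "pdisj D"
  shows "decomp_topology K D homeomorphic_space decomp_topology T ((image h) ` D)"
proof -
  have inj: "inj_on h K"
    by (rule inj_on_inverseI[where g=g]) (use hom in \<open>simp add: homeomorphism_def\<close>)
  have hK: "h ` K = T" using hom unfolding homeomorphism_def by blast
  have E: "\<Union>((image h) ` D) = T" "pdisj ((image h) ` D)"
    using D hK apply blast
    using pdisj_image[OF D(2) inj D(1)] .
  have gh: "g ` h ` d = d" if "d \<in> D" for d
  proof -
    have "d \<subseteq> K" using that D by blast
    moreover have "\<forall>x\<in>K. g (h x) = x" using hom unfolding homeomorphism_def by blast
    ultimately have "\<forall>x\<in>d. g (h x) = x" by blast
    then show ?thesis by (simp add: image_image)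
  qed
  then have bk: "(image g) ` ((image h) ` D) = D" by (simp add: image_image)
  have hom2: "homeomorphism T K g h" using homeomorphism_symD[OF hom] .
  have c1: "continuous_map (decomp_topology K D) (decomp_topology T ((image h) ` D)) (image h)"
    by (rule dmap_cont[OF hom D])
  have c2: "continuous_map (decomp_topology T ((image h) ` D)) (decomp_topology K D) (image g)"
    using dmap_cont[OF hom2 E] bk by simp
  have hg: "\<And>e. e \<in> (image h) ` D \<Longrightarrow> h ` g ` e = e" using gh by force
  have t1: "topspace (decomp_topology K D) = D" using topspace_decomp[OF D(2) D(1)] .
  have t2: "topspace (decomp_topology T ((image h) ` D)) = (image h) ` D" using topspace_decomp[OF E(2) E(1)] .
  have "homeomorphic_maps (decomp_topology K D) (decomp_topology T ((image h) ` D)) (image h) (image g)"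
    unfolding homeomorphic_maps_def t1 t2 using c1 c2 by (simp add: gh)
  then show ?thesis unfolding homeomorphic_space_def by blast
qed


lemma mono_parts:
  assumes "monotone_decomp K D"
  shows "\<Union>D = K" "\<And>d. d \<in> D \<Longrightarrow> d \<noteq> {} \<and> compact d \<and> connected d"
    "\<And>U. openin (top_of_set K) U \<Longrightarrow> openin (top_of_set K) (\<Union>{d\<in>D. d \<subseteq> U})"
proof -
  have c: "\<Union>D = K \<and>
     (\<forall>d\<in>D. d \<noteq> {} \<and> compact d \<and> connected d) \<and>
     (\<forall>d\<in>D. \<forall>e\<in>D. d \<noteq> e \<longrightarrow> d \<inter> e = {}) \<and>
     (\<forall>U. openin (top_of_set K) U \<longrightarrow> openin (top_of_set K) (\<Union>{d\<in>D. d \<subseteq> U}))"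
    using assms unfolding monotone_decomp_def .
  show "\<Union>D = K" using c by (rule conjunct1)
  show "\<And>d. d \<in> D \<Longrightarrow> d \<noteq> {} \<and> compact d \<and> connected d"
    using conjunct1[OF conjunct2[OF c]] by (rule bspec)
  show "\<And>U. openin (top_of_set K) U \<Longrightarrow> openin (top_of_set K) (\<Union>{d\<in>D. d \<subseteq> U})"
  proof -
    fix U assume "openin (top_of_set K) U"
    then show "openin (top_of_set K) (\<Union>{d\<in>D. d \<subseteq> U})"
      using conjunct2[OF conjunct2[OF conjunct2[OF c]]] by blast
  qed
qed

lemma PS_parts:
  assumes "is_PS_decomp K D"
  shows "monotone_decomp K D" "peano_space (decomp_topology K D)"
    "\<And>E. monotone_decomp K E \<Longrightarrow> peano_space (decomp_topology K E) \<Longrightarrow> finer_decomp D E"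
  using assms unfolding is_PS_decomp_def by auto

lemma mono_pdisj: "monotone_decomp K D \<Longrightarrow> pdisj D"
  unfolding monotone_decomp_def pdisj_def by blast

lemma mono_image:
  assumes M: "monotone_decomp K D" and hom: "homeomorphism K T h g"
  shows "monotone_decomp T ((image h) ` D)"
proof -
  have inj: "inj_on h K"
    by (rule inj_on_inverseI[where g=g]) (use hom in \<open>simp add: homeomorphism_def\<close>)
  have hK: "h ` K = T" using hom unfolding homeomorphism_def by blast
  have cont: "continuous_on K h" using hom unfolding homeomorphism_def by blast
  have UD: "\<Union>D = K" using mono_parts(1)[OF M] .
  have P: "pdisj D" using mono_pdisj[OF M] .
  have el: "\<And>d. d \<in> D \<Longrightarrow> d \<noteq> {} \<and> compact d \<and> connected d" using mono_parts(2)[OF M] .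
  have usc: "\<And>U. openin (top_of_set K) U \<Longrightarrow> openin (top_of_set K) (\<Union>{d\<in>D. d \<subseteq> U})"
    using mono_parts(3)[OF M] .
  have A: "\<Union>((image h) ` D) = T" using UD hK by blast
  have B: "\<forall>e\<in>(image h) ` D. e \<noteq> {} \<and> compact e \<and> connected e"
  proof
    fix e assume "e \<in> (image h) ` D"
    then obtain d where d: "d \<in> D" "e = h ` d" by blast
    have dK: "d \<subseteq> K" using d UD by blast
    have cd: "continuous_on d h" using continuous_on_subset[OF cont dK] .
    show "e \<noteq> {} \<and> compact e \<and> connected e"
      using el[OF d(1)] d(2) compact_continuous_image[OF cd] connected_continuous_image[OF cd] by blast
  qed
  have C: "\<forall>d\<in>(image h) ` D. \<forall>e\<in>(image h) ` D. d \<noteq> e \<longrightarrow> d \<inter> e = {}"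
    using pdisj_image[OF P inj UD] unfolding pdisj_def .
  have E: "\<forall>U. openin (top_of_set T) U \<longrightarrow> openin (top_of_set T) (\<Union>{d\<in>(image h) ` D. d \<subseteq> U})"
  proof (intro allI impI)
    fix U assume U: "openin (top_of_set T) U"
    have hKT: "h \<in> K \<rightarrow> T" using hK by blast
    define V where "V = K \<inter> h -` U"
    have V: "openin (top_of_set K) V"
      unfolding V_def using continuous_openin_preimage[OF cont hKT U] .
    have W: "openin (top_of_set K) (\<Union>{d\<in>D. d \<subseteq> V})" using usc[OF V] .
    have "{e\<in>(image h) ` D. e \<subseteq> U} = (image h) ` {d\<in>D. d \<subseteq> V}"
    proof (rule set_eqI, rule iffI)
      fix e assume "e \<in> {e\<in>(image h) ` D. e \<subseteq> U}"
      then obtain d where d: "d \<in> D" "e = h ` d" "h ` d \<subseteq> U" by blast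
      have "d \<subseteq> K" using d UD by blast
      then have "d \<subseteq> V" using d unfolding V_def by blast
      then show "e \<in> (image h) ` {d\<in>D. d \<subseteq> V}" using d by blast
    next
      fix e assume "e \<in> (image h) ` {d\<in>D. d \<subseteq> V}"
      then obtain d where d: "d \<in> D" "e = h ` d" "d \<subseteq> V" by blast
      then show "e \<in> {e\<in>(image h) ` D. e \<subseteq> U}" unfolding V_def by blast
    qed
    then have "\<Union>{e\<in>(image h) ` D. e \<subseteq> U} = h ` \<Union>{d\<in>D. d \<subseteq> V}" by (simp add: image_Union)
    then show "openin (top_of_set T) (\<Union>{d\<in>(image h) ` D. d \<subseteq> U})"
      using homeomorphism_imp_open_map[OF hom W] by simp
  qed
  show ?thesis unfolding monotone_decomp_def using A B C E by (intro conjI)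
qed

lemma PS_image:
  assumes P: "is_PS_decomp K D" and hom: "homeomorphism K T h g"
  shows "monotone_decomp T ((image h) ` D) \<and> peano_space (decomp_topology T ((image h) ` D))"
proof -
  have M: "monotone_decomp K D" using P unfolding is_PS_decomp_def by (rule conjunct1)
  have UD: "\<Union>D = K" using mono_parts(1)[OF M] .
  have H: "decomp_topology K D homeomorphic_space decomp_topology T ((image h) ` D)"
    using dmap_homeo[OF hom UD mono_pdisj[OF M]] .
  show ?thesis using mono_image[OF M hom] peano_homeo[OF PS_parts(2)[OF P] H] by (rule conjI)
qed

theorem theoremC:
  fixes K :: "(real^3) set" and h :: "real^3 \<Rightarrow> real^3"
    and D D' :: "(real^3) set set"
  assumes "compact K" and "K \<subseteq> riemann_sphere"
    and "continuous_on K h" and "inj_on h K" and "h ` K \<subseteq> riemann_sphere"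
    and "is_PS_decomp K D" and "is_PS_decomp (h ` K) D'"
  shows "(\<forall>d\<in>D. h ` d \<in> D') \<and>
         decomp_topology K D homeomorphic_space decomp_topology (h ` K) D'"
proof -
  obtain g where hom: "homeomorphism K (h ` K) h g"
    using homeomorphism_compact[OF assms(1) assms(3) refl assms(4)] by blast
  have hom2: "homeomorphism (h ` K) K g h" using homeomorphism_symD[OF hom] .
  have MD: "monotone_decomp K D" using assms(6) unfolding is_PS_decomp_def by (rule conjunct1)
  have MD': "monotone_decomp (h ` K) D'" using assms(7) unfolding is_PS_decomp_def by (rule conjunct1)
  have UD: "\<Union>D = K" using mono_parts(1)[OF MD] .
  have UD': "\<Union>D' = h ` K" using mono_parts(1)[OF MD'] .
  have ne: "\<And>d. d \<in> D \<Longrightarrow> d \<noteq> {}" using mono_parts(2)[OF MD] by blast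
  have ne': "\<And>d. d \<in> D' \<Longrightarrow> d \<noteq> {}" using mono_parts(2)[OF MD'] by blast
  have PD: "pdisj D" using mono_pdisj[OF MD] .
  have PD': "pdisj D'" using mono_pdisj[OF MD'] .
  have inj: "inj_on h K" using assms(4) .
  have gh: "\<And>x. x \<in> K \<Longrightarrow> g (h x) = x" using hom unfolding homeomorphism_def by blast
  have hg: "\<And>y. y \<in> h ` K \<Longrightarrow> h (g y) = y" using hom unfolding homeomorphism_def by blast
  have f1: "finer_decomp D' ((image h) ` D)"
    using PS_parts(3)[OF assms(7)] PS_image[OF assms(6) hom] by blast
  have f2: "finer_decomp D ((image g) ` D')"
    using PS_parts(3)[OF assms(6)] PS_image[OF assms(7) hom2] by blast
  have key: "h ` d \<in> D'" if d: "d \<in> D" for d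
  proof -
    obtain e' where e': "e' \<in> D'" "d \<subseteq> g ` e'" using f2 d unfolding finer_decomp_def by blast
    have e'sub: "e' \<subseteq> h ` K" using e' UD' by blast
    have "\<forall>y\<in>e'. h (g y) = y" using hg e'sub by blast
    then have "h ` g ` e' = e'" by (simp add: image_image)
    then have s1: "h ` d \<subseteq> e'" using e'(2) by (metis image_mono)
    obtain e where e: "e \<in> D" "e' \<subseteq> h ` e" using f1 e'(1) unfolding finer_decomp_def by blast
    have "h ` d \<subseteq> h ` e" using s1 e(2) by blast
    moreover have "d \<subseteq> K" "e \<subseteq> K" using d e UD by blast+
    ultimately have "d \<subseteq> e"
    proof -
      assume a: "h ` d \<subseteq> h ` e" "d \<subseteq> K" "e \<subseteq> K"
      show "d \<subseteq> e"
      proof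
        fix x assume x: "x \<in> d"
        then obtain y where y: "y \<in> e" "h x = h y" using a(1) by blast
        have "x = y" using inj_onD[OF inj y(2)] x y(1) a(2,3) by blast
        then show "x \<in> e" using y by blast
      qed
    qed
    moreover have "d \<inter> e \<noteq> {}" using \<open>d \<subseteq> e\<close> ne[OF d] by blast
    ultimately have "d = e" using PD d e(1) unfolding pdisj_def by (meson)
    then have "h ` d = e'" using s1 e(2) by blast
    then show ?thesis using e' by blast
  qed
  have eqD: "D' = (image h) ` D"
  proof
    show "(image h) ` D \<subseteq> D'" using key by blast
    show "D' \<subseteq> (image h) ` D"
    proof
      fix d' assume d': "d' \<in> D'"
      obtain e where e: "e \<in> D" "d' \<subseteq> h ` e" using f1 d' unfolding finer_decomp_def by blast
      have "h ` e \<in> D'" using key e(1) .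
      moreover have "d' \<inter> h ` e \<noteq> {}" using ne'[OF d'] e(2) by blast
      ultimately have "d' = h ` e" using PD' d' unfolding pdisj_def by (meson)
      then show "d' \<in> (image h) ` D" using e by blast
    qed
  qed
  show ?thesis using key dmap_homeo[OF hom UD PD] eqD by simp
qed

end
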